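(* Let $\Phi_1,\Phi_2,\Phi_3,\Psi_1,\Psi_2,\Psi_3:\mathbb{Z}^3\to\mathbb{Q}$ be the functions defined in the context. (a) For all integers $a,b,c$ and each $i\in\{1,2,3\}$, \[ \Phi_i(a,b,c)\,\Phi_i(a-2,b-3,c-2)=\Phi_i(a-1,b-1,c)\,\Phi_i(a-1,b-2,c-2)+\Phi_i(a-2,b-2,c-1)\,\Phi_i(a,b-1,c-1) \] and \[ \Psi_i(a,b,c)\,\Psi_i(a-2,b-3,c-2)=\Psi_i(a-1,b-1,c)\,\Psi_i(a-1,b-2,c-2)+\Psi_i(a-2,b-2,c-1)\,\Psi_i(a,b-1,c-1). \] (b) For all integers $a,b,c$ and each $i\in\{1,2,3\}$, \[ \Phi_i(a,b,c)\,\Phi_i(a-2,b-3,c-2)=\Psi_{4-i}(c,b-1,a-1)\,\Phi_i(a-1,b-2,c-2)+\Phi_i(a-2,b-2,c-1)\,\Phi_i(a,b-1,c-1) \] and \[ \Psi_i(a,b,c)\,\Psi_i(a-2,b-3,c-2)=\Phi_{4-i}(c,b-1,a-1)\,\Psi_i(a-1,b-2,c-2)+\Psi_i(a-2,b-2,c-1)\,\Psi_i(a,b-1,c-1). \]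
   Context: For integers $a,b,c$ define $g(a,b,c)=(b-a)(b-c)+\left\lfloor\frac{(a-c)^2}{3}\right\rfloor$, $q(a,b,c)=\left\lfloor\frac{(a-b+c)^2}{4}\right\rfloor$, $\alpha(a,b,c)=2$ if $3b+a-c\equiv 1\pmod 6$, $\alpha(a,b,c)=3$ if $3b+a-c\equiv 5\pmod 6$, and $\alpha(a,b,c)=1$ otherwise; $\beta(a,b,c)=3$ if $3b+a-c\equiv 1\pmod 6$, $\beta(a,b,c)=2$ if $3b+a-c\equiv 5\pmod 6$, and $\beta(a,b,c)=1$ otherwise. Writing $g=g(a,b,c)$, $q=q(a,b,c)$ and $r=\lfloor (a-c+1)/3\rfloor$, define (exponents may be negative, so values are rational) $\Phi_1(a,b,c)=\alpha(a,b,c)\,2^{g(a,b,c+1)}5^{g}11^{q}$, $\Phi_2(a,b,c)=\alpha(a,b,c)\,2^{g(a,b,c-1)-r+(a-b)}5^{g}11^{q}$, $\Phi_3(a,b,c)=\alpha(a,b,c)\,2^{g(a,b,c-1)-r}5^{g}11^{q}$, $\Psi_1(a,b,c)=\beta(a,b,c)\,2^{g(a,b,c-1)}5^{g}11^{q}$, $\Psi_2(a,b,c)=\beta(a,b,c)\,2^{g(a,b,c+1)+r-(a-b)}5^{g}11^{q}$, $\Psi_3(a,b,c)=\beta(a,b,c)\,2^{g(a,b,c+1)+r}5^{g}11^{q}$. *)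

theory Defs
  imports Complex_Main
begin

definition g :: "int \<Rightarrow> int \<Rightarrow> int \<Rightarrow> int" where
  "g a b c = (b - a) * (b - c) + floor ((of_int ((a - c)^2) :: rat) / 3)"

definition q :: "int \<Rightarrow> int \<Rightarrow> int \<Rightarrow> int" where
  "q a b c = floor ((of_int ((a - b + c)^2) :: rat) / 4)"

definition r :: "int \<Rightarrow> int \<Rightarrow> int \<Rightarrow> int" where
  "r a b c = floor ((of_int (a - c + 1) :: rat) / 3)"

definition alpha :: "int \<Rightarrow> int \<Rightarrow> int \<Rightarrow> rat" where
  "alpha a b c = (if (3*b + a - c) mod 6 = 1 then 2
                  else if (3*b + a - c) mod 6 = 5 then 3 else 1)"

definition beta :: "int \<Rightarrow> int \<Rightarrow> int \<Rightarrow> rat" where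
  "beta a b c = (if (3*b + a - c) mod 6 = 1 then 3
                 else if (3*b + a - c) mod 6 = 5 then 2 else 1)"

definition common :: "int \<Rightarrow> int \<Rightarrow> int \<Rightarrow> rat" where
  "common a b c = 5 powi (g a b c) * 11 powi (q a b c)"

definition Phi1 :: "int \<Rightarrow> int \<Rightarrow> int \<Rightarrow> rat" where
  "Phi1 a b c = alpha a b c * 2 powi (g a b (c+1)) * common a b c"
definition Phi2 :: "int \<Rightarrow> int \<Rightarrow> int \<Rightarrow> rat" where
  "Phi2 a b c = alpha a b c * 2 powi (g a b (c-1) - r a b c + (a - b)) * common a b c"
definition Phi3 :: "int \<Rightarrow> int \<Rightarrow> int \<Rightarrow> rat" where
  "Phi3 a b c = alpha a b c * 2 powi (g a b (c-1) - r a b c) * common a b c"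
definition Psi1 :: "int \<Rightarrow> int \<Rightarrow> int \<Rightarrow> rat" where
  "Psi1 a b c = beta a b c * 2 powi (g a b (c-1)) * common a b c"
definition Psi2 :: "int \<Rightarrow> int \<Rightarrow> int \<Rightarrow> rat" where
  "Psi2 a b c = beta a b c * 2 powi (g a b (c+1) + r a b c - (a - b)) * common a b c"
definition Psi3 :: "int \<Rightarrow> int \<Rightarrow> int \<Rightarrow> rat" where
  "Psi3 a b c = beta a b c * 2 powi (g a b (c+1) + r a b c) * common a b c"

definition Phi :: "nat \<Rightarrow> int \<Rightarrow> int \<Rightarrow> int \<Rightarrow> rat" where
  "Phi i = (if i = 1 then Phi1 else if i = 2 then Phi2 else if i = 3 then Phi3 else (\<lambda>_ _ _. 0))"
definition Psi :: "nat \<Rightarrow> int \<Rightarrow> int \<Rightarrow> int \<Rightarrow> rat" where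
  "Psi i = (if i = 1 then Psi1 else if i = 2 then Psi2 else if i = 3 then Psi3 else (\<lambda>_ _ _. 0))"

end

theory Submission imports Defs begin

definition S3 :: "int \<Rightarrow> int" where "S3 x = floor ((of_int (x^2) :: rat) / 3)"
definition S4 :: "int \<Rightarrow> int" where "S4 x = floor ((of_int (x^2) :: rat) / 4)"
definition D3 :: "int \<Rightarrow> int" where "D3 x = floor ((of_int x :: rat) / 3)"

lemma g_alt: "g a b c = (b-a)*(b-c) + S3 (a-c)" by (simp add: g_def S3_def)
lemma q_alt: "q a b c = S4 (a-b+c)" by (simp add: q_def S4_def)
lemma r_alt: "r a b c = D3 (a-c+1)" by (simp add: r_def D3_def)

lemma mod3_cases: "(x::int) mod 3 = 0 \<or> x mod 3 = 1 \<or> x mod 3 = 2" by presburger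

lemma S3_rat: "(of_int (S3 x) :: rat) = (of_int x ^ 2 - (if x mod 3 = 0 then 0 else 1)) / 3"
proof -
  have 1: "floor (of_int (x^2) / (3::rat)) = x^2 div 3" by (metis floor_divide_of_int_eq of_int_numeral)
  have 2: "x^2 mod 3 = (if x mod 3 = 0 then 0 else 1)"
  proof -
    have "x^2 mod 3 = ((x mod 3)^2) mod 3" by (simp add: power_mod)
    then show ?thesis using mod3_cases[of x] by auto
  qed
  have 3: "x^2 = 3 * (x^2 div 3) + x^2 mod 3" by simp
  have "(of_int (x^2) :: rat) = 3 * of_int (x^2 div 3) + of_int (x^2 mod 3)"
    using 3 by (metis of_int_add of_int_mult of_int_numeral)
  then show ?thesis unfolding S3_def 1 using 2 by (auto simp: field_simps)
qed

lemma S4_rat: "(of_int (S4 x) :: rat) = (of_int x ^ 2 - (if even x then 0 else 1)) / 4"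
proof -
  have 1: "floor (of_int (x^2) / (4::rat)) = x^2 div 4" by (metis floor_divide_of_int_eq of_int_numeral)
  have 2: "x^2 mod 4 = (if even x then 0 else 1)"
  proof (cases "even x")
    case True then obtain k where "x = 2*k" by auto
    then show ?thesis by (simp add: power2_eq_square)
  next
    case False then obtain k where "x = 2*k+1" using oddE by blast
    then have h: "x^2 = 4*(k*k+k) + 1" by (simp add: power2_eq_square algebra_simps)
    have m: "\<And>m::int. (4*m+1) mod 4 = 1" by presburger
    have "x^2 mod 4 = 1" by (subst h, rule m)
    then show ?thesis using False by simp
  qed
  have 3: "x^2 = 4 * (x^2 div 4) + x^2 mod 4" by simp
  have "(of_int (x^2) :: rat) = 4 * of_int (x^2 div 4) + of_int (x^2 mod 4)"
    using 3 by (metis of_int_add of_int_mult of_int_numeral)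
  then show ?thesis unfolding S4_def 1 using 2 by (auto simp: field_simps)
qed

lemma D3_rat: "(of_int (D3 x) :: rat) = (of_int x - of_int (x mod 3)) / 3"
proof -
  have 1: "floor (of_int x / (3::rat)) = x div 3" by (metis floor_divide_of_int_eq of_int_numeral)
  have 3: "x = 3 * (x div 3) + x mod 3" by simp
  have "(of_int x :: rat) = 3 * of_int (x div 3) + of_int (x mod 3)"
    using 3 by (metis of_int_add of_int_mult of_int_numeral)
  then show ?thesis unfolding D3_def 1 by (auto simp: field_simps)
qed

lemma m6a: "((3*y - 2*x) mod 6 = 1) = (odd y \<and> x mod 3 = (1::int))" by presburger
lemma m6b: "((3*y - 2*x) mod 6 = 5) = (odd y \<and> x mod 3 = (2::int))" by presburger
lemma alpha_alt: "alpha a b c = (if odd (a+b-c) \<and> (a-c) mod 3 = 1 then 2 else if odd (a+b-c) \<and> (a-c) mod 3 = 2 then 3 else 1)"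
proof -
  have e: "3*b + a - c = 3*(a+b-c) - 2*(a-c)" by simp
  show ?thesis unfolding alpha_def e m6a m6b by simp
qed
lemma beta_alt: "beta a b c = (if odd (a+b-c) \<and> (a-c) mod 3 = 1 then 3 else if odd (a+b-c) \<and> (a-c) mod 3 = 2 then 2 else 1)"
proof -
  have e: "3*b + a - c = 3*(a+b-c) - 2*(a-c)" by simp
  show ?thesis unfolding beta_def e m6a m6b by simp
qed

lemma reduce3:
  fixes a c :: int and P :: "int \<Rightarrow> int \<Rightarrow> bool"
  assumes "\<And>t s. s = 0 \<or> s = 1 \<or> s = 2 \<Longrightarrow> P (c + 3*t + s) c"
  shows "P a c"
proof -
  define t where "t = (a-c) div 3"
  define s where "s = (a-c) mod 3"
  have "a = c + 3*t + s" unfolding t_def s_def by simp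
  moreover have "s = 0 \<or> s = 1 \<or> s = 2" unfolding s_def by presburger
  ultimately show ?thesis using assms by blast
qed

lemma reduce6:
  fixes a b c :: int and P :: "int \<Rightarrow> int \<Rightarrow> int \<Rightarrow> bool"
  assumes "\<And>t u s v. s = 0 \<or> s = 1 \<or> s = 2 \<Longrightarrow> v = 0 \<or> v = 1 \<Longrightarrow> P (c + 3*t + s) (2*u + v - 3*t - s) c"
  shows "P a b c"
proof -
  define t where "t = (a-c) div 3"
  define s where "s = (a-c) mod 3"
  define u where "u = (b+a-c) div 2"
  define v where "v = (b+a-c) mod 2"
  have "a = c + 3*t + s" unfolding t_def s_def by simp
  moreover have "b = 2*u + v - 3*t - s" using \<open>a = c + 3*t + s\<close> unfolding u_def v_def by simp
  moreover have "s = 0 \<or> s = 1 \<or> s = 2" unfolding s_def by presburger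
  moreover have "v = 0 \<or> v = 1" unfolding v_def by presburger
  ultimately show ?thesis using assms by blast
qed

lemma modm1: "((t::int) * n + k) mod n = k mod n" by simp
lemma modm2: "((t::int) * n - k) mod n = (- k) mod n" by (metis diff_conv_add_uminus modm1)
lemma modm3: "((k::int) + t * n) mod n = k mod n" by simp
lemma modm4: "((k::int) - t * n) mod n = k mod n" by (metis diff_conv_add_uminus minus_mult_left modm3)

lemma int_via_rat: "(of_int x :: rat) = of_int y \<Longrightarrow> x = y" by simp

lemma D3_div: "D3 x = x div 3" unfolding D3_def by (metis floor_divide_of_int_eq of_int_numeral)

lemma F01: "g (a-1) (b-1) c + g (a-1) (b-2) (c-2) = g a b c + g (a-2) (b-3) (c-2) + (if (a-c) mod 3 = 0 then -1 else 0)"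
  by (induct a c rule: reduce3; elim disjE; simp only:; rule int_via_rat;
     simp only: g_alt of_int_add of_int_mult of_int_diff of_int_minus S3_rat;
     simp add: algebra_simps modm1 modm2 modm3 modm4;
     simp add: field_simps power2_eq_square)
lemma F02: "g (a-2) (b-2) (c-1) + g a (b-1) (c-1) = g a b c + g (a-2) (b-3) (c-2) + (if (a-c) mod 3 = 0 then -1 else 0)"
  by (induct a c rule: reduce3; elim disjE; simp only:; rule int_via_rat;
     simp only: g_alt of_int_add of_int_mult of_int_diff of_int_minus S3_rat;
     simp add: algebra_simps modm1 modm2 modm3 modm4;
     simp add: field_simps power2_eq_square)
lemma Fp1: "g (a-1) (b-1) (c+1) + g (a-1) (b-2) (c-2+1) = g a b (c+1) + g (a-2) (b-3) (c-2+1) + (if (a-c) mod 3 = 1 then -1 else 0)"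
  by (induct a c rule: reduce3; elim disjE; simp only:; rule int_via_rat;
     simp only: g_alt of_int_add of_int_mult of_int_diff of_int_minus S3_rat;
     simp add: algebra_simps modm1 modm2 modm3 modm4;
     simp add: field_simps power2_eq_square)
lemma Fp2: "g (a-2) (b-2) (c-1+1) + g a (b-1) (c-1+1) = g a b (c+1) + g (a-2) (b-3) (c-2+1) + (if (a-c) mod 3 = 1 then -1 else 0)"
  by (induct a c rule: reduce3; elim disjE; simp only:; rule int_via_rat;
     simp only: g_alt of_int_add of_int_mult of_int_diff of_int_minus S3_rat;
     simp add: algebra_simps modm1 modm2 modm3 modm4;
     simp add: field_simps power2_eq_square)
lemma Fm1: "g (a-1) (b-1) (c-1) + g (a-1) (b-2) (c-2-1) = g a b (c-1) + g (a-2) (b-3) (c-2-1) + (if (a-c) mod 3 = 2 then -1 else 0)"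
  by (induct a c rule: reduce3; elim disjE; simp only:; rule int_via_rat;
     simp only: g_alt of_int_add of_int_mult of_int_diff of_int_minus S3_rat;
     simp add: algebra_simps modm1 modm2 modm3 modm4;
     simp add: field_simps power2_eq_square)
lemma Fm2: "g (a-2) (b-2) (c-1-1) + g a (b-1) (c-1-1) = g a b (c-1) + g (a-2) (b-3) (c-2-1) + (if (a-c) mod 3 = 2 then -1 else 0)"
  by (induct a c rule: reduce3; elim disjE; simp only:; rule int_via_rat;
     simp only: g_alt of_int_add of_int_mult of_int_diff of_int_minus S3_rat;
     simp add: algebra_simps modm1 modm2 modm3 modm4;
     simp add: field_simps power2_eq_square)
lemma Rkey: "(x::int) div 3 + (x+2) div 3 = 2*((x+1) div 3) + (if x mod 3 = 1 then 1 else if x mod 3 = 2 then -1 else 0)"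
proof -
  obtain k where k: "x = 3*k + x mod 3" by (metis add.commute mod_mult_div_eq mult.commute)
  have "x mod 3 = 0 \<or> x mod 3 = 1 \<or> x mod 3 = 2" by presburger
  then show ?thesis
  proof (elim disjE)
    assume h: "x mod 3 = 0"
    then have "x = 3*k" using k by simp
    then show ?thesis using h by simp
  next
    assume h: "x mod 3 = 1"
    then have "x = 3*k+1" using k by simp
    then show ?thesis using h by simp
  next
    assume h: "x mod 3 = 2"
    then have "x = 3*k+2" using k by simp
    then show ?thesis using h by simp
  qed
qed
lemma R1: "r (a-1) (b-1) c + r (a-1) (b-2) (c-2) = r a b c + r (a-2) (b-3) (c-2) + (if (a-c) mod 3 = 1 then 1 else if (a-c) mod 3 = 2 then -1 else 0)"
  unfolding r_alt D3_div using Rkey[of "a-c"] by (simp add: algebra_simps)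
lemma R2: "r (a-2) (b-2) (c-1) + r a (b-1) (c-1) = r a b c + r (a-2) (b-3) (c-2) + (if (a-c) mod 3 = 1 then 1 else if (a-c) mod 3 = 2 then -1 else 0)"
  unfolding r_alt D3_div using Rkey[of "a-c"] by (simp add: algebra_simps)
lemma Q1: "q (a-1) (b-1) c + q (a-1) (b-2) (c-2) = q a b c + q (a-2) (b-3) (c-2)"
  unfolding q_alt by (simp add: algebra_simps)
lemma Q2: "q (a-2) (b-2) (c-1) + q a (b-1) (c-1) = q a b c + q (a-2) (b-3) (c-2)"
  unfolding q_alt by (simp add: algebra_simps)
lemma CA: "alpha a b c * alpha (a-2) (b-3) (c-2) = (alpha (a-1) (b-1) c * alpha (a-1) (b-2) (c-2) + alpha (a-2) (b-2) (c-1) * alpha a (b-1) (c-1)) * 2 powi (if (a-c) mod 3 = 1 then -1 else 0) * 5 powi (if (a-c) mod 3 = 0 then -1 else 0)"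
  by (induct a b c rule: reduce6; elim disjE; simp only:; simp only: alpha_alt beta_alt;
     simp add: algebra_simps modm1 modm2 modm3 modm4)
lemma CB: "beta a b c * beta (a-2) (b-3) (c-2) = (beta (a-1) (b-1) c * beta (a-1) (b-2) (c-2) + beta (a-2) (b-2) (c-1) * beta a (b-1) (c-1)) * 2 powi (if (a-c) mod 3 = 2 then -1 else 0) * 5 powi (if (a-c) mod 3 = 0 then -1 else 0)"
  by (induct a b c rule: reduce6; elim disjE; simp only:; simp only: alpha_alt beta_alt;
     simp add: algebra_simps modm1 modm2 modm3 modm4)
lemma X1: "g c b (a+1) + r c b a = g a b (c+1)"
  by (induct a c rule: reduce3; elim disjE; simp only:; rule int_via_rat;
     simp only: g_alt r_alt of_int_add of_int_mult of_int_diff of_int_minus S3_rat D3_rat;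
     simp add: algebra_simps modm1 modm2 modm3 modm4;
     simp add: field_simps power2_eq_square)
lemma X2: "g c b (a+1) + r c b a - (c - b) = g a b (c-1) - r a b c + (a - b)"
  by (induct a c rule: reduce3; elim disjE; simp only:; rule int_via_rat;
     simp only: g_alt r_alt of_int_add of_int_mult of_int_diff of_int_minus S3_rat D3_rat;
     simp add: algebra_simps modm1 modm2 modm3 modm4;
     simp add: field_simps power2_eq_square)
lemma X3: "g c b (a-1) = g a b (c-1) - r a b c"
  by (induct a c rule: reduce3; elim disjE; simp only:; rule int_via_rat;
     simp only: g_alt r_alt of_int_add of_int_mult of_int_diff of_int_minus S3_rat D3_rat;
     simp add: algebra_simps modm1 modm2 modm3 modm4;
     simp add: field_simps power2_eq_square)
lemma m6c: "((3*b - d) mod 6 = 1) = ((3*b + d) mod 6 = (5::int))" by presburger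
lemma m6d: "((3*b - d) mod 6 = 5) = ((3*b + d) mod 6 = (1::int))" by presburger
lemma CBA: "beta c b a = alpha a b c"
proof -
  have e1: "3*b + c - a = 3*b - (a - c)" and e2: "3*b + a - c = 3*b + (a-c)" by simp_all
  show ?thesis unfolding alpha_def beta_def e1 e2 m6c m6d by simp
qed
lemma GS: "g a b c = g c b a" by (simp add: g_def power2_commute mult.commute)
lemma QS: "q a b c = q c b a" by (simp add: q_def algebra_simps)

lemma comb:
  fixes cL c1 c2 :: rat
  assumes "E1 = E + k" "E2 = E + k" "F1 = F + m" "F2 = F + m" "H1 = H" "H2 = H"
    "cL = (c1 + c2) * 2 powi k * 5 powi m"
  shows "cL * 2 powi E * 5 powi F * 11 powi H = c1 * 2 powi E1 * 5 powi F1 * 11 powi H1 + c2 * 2 powi E2 * 5 powi F2 * 11 powi H2"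
  using assms by (simp add: power_int_add algebra_simps)

lemma prodnf: "(x1 * 2 powi e1 * 5 powi f1 * 11 powi h1) * (x2 * 2 powi e2 * 5 powi f2 * 11 powi h2) = (x1*x2) * 2 powi (e1+e2) * 5 powi (f1+f2) * (11::rat) powi (h1+h2)"
  by (simp add: power_int_add mult_ac)

lemma Phi1_nf: "Phi1 a b c = alpha a b c * 2 powi (g a b (c+1)) * 5 powi g a b c * 11 powi q a b c"
  by (simp add: Phi1_def common_def mult_ac)
lemma Phi2_nf: "Phi2 a b c = alpha a b c * 2 powi (g a b (c-1) - r a b c + (a - b)) * 5 powi g a b c * 11 powi q a b c"
  by (simp add: Phi2_def common_def mult_ac)
lemma Phi3_nf: "Phi3 a b c = alpha a b c * 2 powi (g a b (c-1) - r a b c) * 5 powi g a b c * 11 powi q a b c"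
  by (simp add: Phi3_def common_def mult_ac)
lemma Psi1_nf: "Psi1 a b c = beta a b c * 2 powi (g a b (c-1)) * 5 powi g a b c * 11 powi q a b c"
  by (simp add: Psi1_def common_def mult_ac)
lemma Psi2_nf: "Psi2 a b c = beta a b c * 2 powi (g a b (c+1) + r a b c - (a - b)) * 5 powi g a b c * 11 powi q a b c"
  by (simp add: Psi2_def common_def mult_ac)
lemma Psi3_nf: "Psi3 a b c = beta a b c * 2 powi (g a b (c+1) + r a b c) * 5 powi g a b c * 11 powi q a b c"
  by (simp add: Psi3_def common_def mult_ac)

lemma D1: "Psi3 c b a = Phi1 a b c"
  unfolding Psi3_nf Phi1_nf X1[of c b a] CBA GS[of c b a] QS[of c b a] ..
lemma D2: "Psi2 c b a = Phi2 a b c"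
  unfolding Psi2_nf Phi2_nf X2[of c b a] CBA GS[of c b a] QS[of c b a] ..
lemma D3': "Psi1 c b a = Phi3 a b c"
  unfolding Psi1_nf Phi3_nf X3[of c b a] CBA GS[of c b a] QS[of c b a] ..

lemma id_Phi1: "Phi1 a b c * Phi1 (a-2) (b-3) (c-2) = Phi1 (a-1) (b-1) c * Phi1 (a-1) (b-2) (c-2) + Phi1 (a-2) (b-2) (c-1) * Phi1 a (b-1) (c-1)"
proof -
  have M: "(a-c) mod 3 = 0 \<or> (a-c) mod 3 = 1 \<or> (a-c) mod 3 = 2" by presburger
  note f = Fp1[of a b c] Fp2[of a b c]
  show ?thesis unfolding Phi1_nf prodnf
    apply (rule comb[where k="if (a-c) mod 3 = 1 then -1 else 0" and m="if (a-c) mod 3 = 0 then -1 else 0"])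
    using M f apply (elim disjE; simp add: algebra_simps)
    using M f apply (elim disjE; simp add: algebra_simps)
    by (rule F01 F02 Q1 Q2 CA)+
qed

lemma id_Phi2: "Phi2 a b c * Phi2 (a-2) (b-3) (c-2) = Phi2 (a-1) (b-1) c * Phi2 (a-1) (b-2) (c-2) + Phi2 (a-2) (b-2) (c-1) * Phi2 a (b-1) (c-1)"
proof -
  have M: "(a-c) mod 3 = 0 \<or> (a-c) mod 3 = 1 \<or> (a-c) mod 3 = 2" by presburger
  note f = Fm1[of a b c] Fm2[of a b c] R1[of a b c] R2[of a b c]
  show ?thesis unfolding Phi2_nf prodnf
    apply (rule comb[where k="if (a-c) mod 3 = 1 then -1 else 0" and m="if (a-c) mod 3 = 0 then -1 else 0"])
    using M f apply (elim disjE; simp add: algebra_simps)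
    using M f apply (elim disjE; simp add: algebra_simps)
    by (rule F01 F02 Q1 Q2 CA)+
qed

lemma id_Phi3: "Phi3 a b c * Phi3 (a-2) (b-3) (c-2) = Phi3 (a-1) (b-1) c * Phi3 (a-1) (b-2) (c-2) + Phi3 (a-2) (b-2) (c-1) * Phi3 a (b-1) (c-1)"
proof -
  have M: "(a-c) mod 3 = 0 \<or> (a-c) mod 3 = 1 \<or> (a-c) mod 3 = 2" by presburger
  note f = Fm1[of a b c] Fm2[of a b c] R1[of a b c] R2[of a b c]
  show ?thesis unfolding Phi3_nf prodnf
    apply (rule comb[where k="if (a-c) mod 3 = 1 then -1 else 0" and m="if (a-c) mod 3 = 0 then -1 else 0"])
    using M f apply (elim disjE; simp add: algebra_simps)
    using M f apply (elim disjE; simp add: algebra_simps)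
    by (rule F01 F02 Q1 Q2 CA)+
qed

lemma id_Psi1: "Psi1 a b c * Psi1 (a-2) (b-3) (c-2) = Psi1 (a-1) (b-1) c * Psi1 (a-1) (b-2) (c-2) + Psi1 (a-2) (b-2) (c-1) * Psi1 a (b-1) (c-1)"
proof -
  have M: "(a-c) mod 3 = 0 \<or> (a-c) mod 3 = 1 \<or> (a-c) mod 3 = 2" by presburger
  note f = Fm1[of a b c] Fm2[of a b c]
  show ?thesis unfolding Psi1_nf prodnf
    apply (rule comb[where k="if (a-c) mod 3 = 2 then -1 else 0" and m="if (a-c) mod 3 = 0 then -1 else 0"])
    using M f apply (elim disjE; simp add: algebra_simps)
    using M f apply (elim disjE; simp add: algebra_simps)
    by (rule F01 F02 Q1 Q2 CB)+
qed

lemma id_Psi2: "Psi2 a b c * Psi2 (a-2) (b-3) (c-2) = Psi2 (a-1) (b-1) c * Psi2 (a-1) (b-2) (c-2) + Psi2 (a-2) (b-2) (c-1) * Psi2 a (b-1) (c-1)"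
proof -
  have M: "(a-c) mod 3 = 0 \<or> (a-c) mod 3 = 1 \<or> (a-c) mod 3 = 2" by presburger
  note f = Fp1[of a b c] Fp2[of a b c] R1[of a b c] R2[of a b c]
  show ?thesis unfolding Psi2_nf prodnf
    apply (rule comb[where k="if (a-c) mod 3 = 2 then -1 else 0" and m="if (a-c) mod 3 = 0 then -1 else 0"])
    using M f apply (elim disjE; simp add: algebra_simps)
    using M f apply (elim disjE; simp add: algebra_simps)
    by (rule F01 F02 Q1 Q2 CB)+
qed

lemma id_Psi3: "Psi3 a b c * Psi3 (a-2) (b-3) (c-2) = Psi3 (a-1) (b-1) c * Psi3 (a-1) (b-2) (c-2) + Psi3 (a-2) (b-2) (c-1) * Psi3 a (b-1) (c-1)"
proof -
  have M: "(a-c) mod 3 = 0 \<or> (a-c) mod 3 = 1 \<or> (a-c) mod 3 = 2" by presburger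
  note f = Fp1[of a b c] Fp2[of a b c] R1[of a b c] R2[of a b c]
  show ?thesis unfolding Psi3_nf prodnf
    apply (rule comb[where k="if (a-c) mod 3 = 2 then -1 else 0" and m="if (a-c) mod 3 = 0 then -1 else 0"])
    using M f apply (elim disjE; simp add: algebra_simps)
    using M f apply (elim disjE; simp add: algebra_simps)
    by (rule F01 F02 Q1 Q2 CB)+
qed

theorem lemma4p3:
  fixes a b c :: int and i :: nat
  assumes "i \<in> {1, 2, 3}"
  shows "(Phi i a b c * Phi i (a-2) (b-3) (c-2) =
           Phi i (a-1) (b-1) c * Phi i (a-1) (b-2) (c-2) + Phi i (a-2) (b-2) (c-1) * Phi i a (b-1) (c-1)) \<and>
         (Psi i a b c * Psi i (a-2) (b-3) (c-2) =
           Psi i (a-1) (b-1) c * Psi i (a-1) (b-2) (c-2) + Psi i (a-2) (b-2) (c-1) * Psi i a (b-1) (c-1)) \<and>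
         (Phi i a b c * Phi i (a-2) (b-3) (c-2) =
           Psi (4-i) c (b-1) (a-1) * Phi i (a-1) (b-2) (c-2) + Phi i (a-2) (b-2) (c-1) * Phi i a (b-1) (c-1)) \<and>
         (Psi i a b c * Psi i (a-2) (b-3) (c-2) =
           Phi (4-i) c (b-1) (a-1) * Psi i (a-1) (b-2) (c-2) + Psi i (a-2) (b-2) (c-1) * Psi i a (b-1) (c-1))"
proof -
  from assms have "i = 1 \<or> i = 2 \<or> i = 3" by auto
  then show ?thesis
  proof (elim disjE)
    assume "i = 1"
    then show ?thesis
      using id_Phi1[of a b c] id_Psi1[of a b c] D1[of c "b-1" "a-1"] D3'[of "a-1" "b-1" c]
      by (simp add: Phi_def Psi_def)
  next
    assume "i = 2"
    then show ?thesis
      using id_Phi2[of a b c] id_Psi2[of a b c] D2[of c "b-1" "a-1"] D2[of "a-1" "b-1" c]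
      by (simp add: Phi_def Psi_def)
  next
    assume "i = 3"
    then show ?thesis
      using id_Phi3[of a b c] id_Psi3[of a b c] D3'[of c "b-1" "a-1"] D1[of "a-1" "b-1" c]
      by (simp add: Phi_def Psi_def)
  qed
qed

end
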